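(* Let $\Gamma\Rightarrow\Delta$ be a saturated upper sequent of a branch $\mathcal{B}$ of a derivation in $\mathsf{CL}$ (with L$>^\star$ and Mon$\forall$) of a sequent $\Rightarrow x_0:A_0$. Then there exist a finite neighbourhood model $\mathcal{M}$ and a realization $(\rho,\sigma)$ of the labels of the branch such that $\mathcal{M}\vDash_{\rho,\sigma}\mathcal{F}$ for every $\mathcal{F}\in\downarrow\Gamma$ and $\mathcal{M}\nvDash_{\rho,\sigma}\mathcal{F}$ for every $\mathcal{F}\in\downarrow\Delta$.
   Context: Syntax: world labels, neighbourhood labels; relational atoms $a\in N(x)$, $x\in a$, $a\subseteq b$; labelled formulas: these, $x:A$, $a\Vdash^\exists A$, $a\Vdash^\forall A$, $x\Vdash_aA|B$, for $A,B\in\mathcal{L}::=p\mid\bot\mid A\wedge B\mid A\lor B\mid A\to B\mid A>B$. The calculus (premisses / conclusion; "fresh": label not in conclusion): initial sequents $x:p,\Gamma\Rightarrow\Delta,x:p$, $x:\bot,\Gamma\Rightarrow\Delta$; G3 rules for $\wedge,\vee,\to$; L$\forall$: $x:A,x\in a,a\Vdash^\forall A,\Gamma\Rightarrow\Delta$ / $x\in a,a\Vdash^\forall A,\Gamma\Rightarrow\Delta$; R$\forall$ (x fresh): $x\in a,\Gamma\Rightarrow\Delta,x:A$ / $\Gamma\Rightarrow\Delta,a\Vdash^\forall A$; L$\exists$ (x fresh): $x\in a,x:A,\Gamma\Rightarrow\Delta$ / $a\Vdash^\exists A,\Gamma\Rightarrow\Delta$; R$\exists$: $x\in a,\Gamma\Rightarrow\Delta,x:A,a\Vdash^\exists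 A$ / $x\in a,\Gamma\Rightarrow\Delta,a\Vdash^\exists A$; R$>$ (a fresh): $a\in N(x),a\Vdash^\exists A,\Gamma\Rightarrow\Delta,x\Vdash_aA|B$ / $\Gamma\Rightarrow\Delta,x:A>B$; L$>^\star$: $a\in N(x),x:A>B,\Gamma\Rightarrow\Delta,a\Vdash^\exists A$ and $a\Vdash^\exists A,x\Vdash_aA|B,a\in N(x),x:A>B,\Gamma\Rightarrow\Delta$ / $a\in N(x),x:A>B,\Gamma\Rightarrow\Delta$; R$|$: $c\in N(x),c\subseteq a,\Gamma\Rightarrow\Delta,x\Vdash_aA|B,c\Vdash^\exists A$ and $c\in N(x),c\subseteq a,\Gamma\Rightarrow\Delta,x\Vdash_aA|B,c\Vdash^\forall A\to B$ / $c\in N(x),c\subseteq a,\Gamma\Rightarrow\Delta,x\Vdash_aA|B$; L$|$ (c fresh): $c\in N(x),c\subseteq a,c\Vdash^\exists A,c\Vdash^\forall A\to B,\Gamma\Rightarrow\Delta$ / $x\Vdash_aA|B,\Gamma\Rightarrow\Delta$; Ref: $a\subseteq a,\Gamma\Rightarrow\Delta$ / $\Gamma\Rightarrow\Delta$; Tr: $c\subseteq a,c\subseteq b,b\subseteq a,\Gamma\Rightarrow\Delta$ / $c\subseteq b,b\subseteq a,\Gamma\Rightarrow\Delta$; L$\subseteq$: $x\in a,a\subseteq b,x\in b,\Gamma\Rightarrow\Delta$ / $x\in a,a\subseteq b,\Gamma\Rightarrow\Delta$; Mon$\forall$: $b\subseteq a,b\Vdash^\forall A,a\Vdash^\forall A,\Gamma\Rightarrow\Delta$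 / $b\subseteq a,a\Vdash^\forall A,\Gamma\Rightarrow\Delta$. For a branch $S_0,\dots,S_k$ with $S_k=\Gamma\Rightarrow\Delta$, $\downarrow\Gamma$ ($\downarrow\Delta$) is the union of the antecedents (succedents) of $S_0,\dots,S_k$. Saturated means: no $x:p$ in $\Gamma\cap\Delta$, no $x:\bot$ in $\Gamma$, and: $x:A\wedge B\in\downarrow\Gamma\Rightarrow x:A,x:B\in\downarrow\Gamma$; $x:A\wedge B\in\downarrow\Delta\Rightarrow x:A$ or $x:B\in\downarrow\Delta$; $x:A\vee B\in\downarrow\Gamma\Rightarrow x:A$ or $x:B\in\downarrow\Gamma$; $x:A\vee B\in\downarrow\Delta\Rightarrow x:A,x:B\in\downarrow\Delta$; $x:A\to B\in\downarrow\Gamma\Rightarrow x:B\in\downarrow\Gamma$ or $x:A\in\downarrow\Delta$; $x:A\to B\in\Delta\Rightarrow x:A\in\downarrow\Gamma$ and $x:B\in\downarrow\Delta$; if $a$ occurs in $\Gamma\cup\Delta$ then $a\subseteq a\in\Gamma$; $a\subseteq b,b\subseteq c\in\Gamma\Rightarrow a\subseteq c\in\Gamma$; $x\in a,a\subseteq b\in\Gamma\Rightarrow x\in b\in\Gamma$; $x\in a,a\Vdash^\forall A\in\Gamma\Rightarrow x:A\in\downarrow\Gamma$; $a\Vdash^\forall A\in\downarrow\Delta\Rightarrow$ some $x$ with $x\in a\in\Gamma$, $x:A\in\downarrow\Delta$; $a\Vdash^\exists A\in\downarrow\Gamma\Rightarrow$ some $x$ with $x\in a\in\Gamma$, $x:A\in\downarrow\Gamma$;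 $x\in a\in\Gamma$, $a\Vdash^\exists A\in\Delta\Rightarrow x:A\in\downarrow\Delta$; $x:A>B\in\downarrow\Delta\Rightarrow$ some $a$ with $a\in N(x)\in\Gamma$, $a\Vdash^\exists A\in\downarrow\Gamma$, $x\Vdash_aA|B\in\Delta$; $a\in N(x),x:A>B\in\Gamma\Rightarrow a\Vdash^\exists A\in\downarrow\Delta$ or ($a\Vdash^\exists A,x\Vdash_aA|B\in\downarrow\Gamma$); $c\in N(x),c\subseteq a\in\Gamma$, $x\Vdash_aA|B\in\Delta\Rightarrow c\Vdash^\exists A\in\Delta$ or $c\Vdash^\forall A\to B\in\downarrow\Delta$; $x\Vdash_aA|B\in\downarrow\Gamma\Rightarrow$ some $c$ with $c\in N(x),c\subseteq a\in\Gamma$, $c\Vdash^\exists A\in\downarrow\Gamma$, $c\Vdash^\forall A\to B\in\Gamma$; $b\subseteq a,a\Vdash^\forall A\in\Gamma\Rightarrow b\Vdash^\forall A\in\Gamma$. Neighbourhood model $\langle W,N,\llbracket\cdot\rrbracket\rangle$: $W\neq\emptyset$, $N:W\to\mathcal{P}(\mathcal{P}(W))$, every $\alpha\in N(x)$ non-empty; $x\Vdash A>B$ iff every $\alpha\in N(x)$ containing an $A$-world has some $\beta\in N(x)$, $\beta\subseteq\alpha$, containing an $A$-world and with all worlds forcing $A\to B$. A realization $(\rho,\sigma)$ maps world labels to worlds and neighbourhood labels to sets of worlds; $\mathcal{M}\vDash_{\rho,\sigma}a\in N(x)$ iff $\sigma(a)\in N(\rho(x))$; $a\subseteq b$ iff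 $\sigma(a)\subseteq\sigma(b)$; $y\in a$ iff $\rho(y)\in\sigma(a)$; $x:A$ iff $\rho(x)\Vdash A$; $a\Vdash^\forall A$ iff all worlds of $\sigma(a)$ force $A$; $a\Vdash^\exists A$ iff some world of $\sigma(a)$ forces $A$; $x\Vdash_aA|B$ iff $\sigma(a)\in N(\rho(x))$ and some $\beta\subseteq\sigma(a)$ contains an $A$-world and all its worlds force $A\to B$. *)

theory Defs
  imports Main "HOL-Library.Multiset"
begin

type_synonym wlab = nat
type_synonym nlab = nat

datatype fm = Atom nat | Bot | Conj fm fm | Disj fm fm | Imp fm fm | Cond fm fm

datatype lf =
    NB nlab wlab              (* a \<in> N(x) *)
  | In wlab nlab              (* x \<in> a *)
  | Sub nlab nlab             (* a \<subseteq> b *)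
  | L wlab fm                 (* x : A *)
  | Ex nlab fm                (* a \<Vdash>\<exists> A *)
  | All nlab fm               (* a \<Vdash>\<forall> A *)
  | Cp wlab nlab fm fm        (* x \<Vdash>_a A|B *)

fun wlabs_lf :: "lf \<Rightarrow> wlab set" where
  "wlabs_lf (NB a x) = {x}"
| "wlabs_lf (In x a) = {x}"
| "wlabs_lf (Sub a b) = {}"
| "wlabs_lf (L x A) = {x}"
| "wlabs_lf (Ex a A) = {}"
| "wlabs_lf (All a A) = {}"
| "wlabs_lf (Cp x a A B) = {x}"

fun nlabs_lf :: "lf \<Rightarrow> nlab set" where
  "nlabs_lf (NB a x) = {a}"
| "nlabs_lf (In x a) = {a}"
| "nlabs_lf (Sub a b) = {a, b}"
| "nlabs_lf (L x A) = {}"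
| "nlabs_lf (Ex a A) = {a}"
| "nlabs_lf (All a A) = {a}"
| "nlabs_lf (Cp x a A B) = {a}"

type_synonym sequent = "lf multiset \<times> lf multiset"

definition wlabs_seq :: "sequent \<Rightarrow> wlab set" where
  "wlabs_seq S = (\<Union>F \<in> set_mset (fst S) \<union> set_mset (snd S). wlabs_lf F)"

definition nlabs_seq :: "sequent \<Rightarrow> nlab set" where
  "nlabs_seq S = (\<Union>F \<in> set_mset (fst S) \<union> set_mset (snd S). nlabs_lf F)"

inductive rule_inst :: "sequent list \<Rightarrow> sequent \<Rightarrow> bool" where
  LConj: "rule_inst [(add_mset (L x A) (add_mset (L x B) G), D)]
                    (add_mset (L x (Conj A B)) G, D)"
| RConj: "rule_inst [(G, add_mset (L x A) D), (G, add_mset (L x B) D)]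
                    (G, add_mset (L x (Conj A B)) D)"
| LDisj: "rule_inst [(add_mset (L x A) G, D), (add_mset (L x B) G, D)]
                    (add_mset (L x (Disj A B)) G, D)"
| RDisj: "rule_inst [(G, add_mset (L x A) (add_mset (L x B) D))]
                    (G, add_mset (L x (Disj A B)) D)"
| LImp: "rule_inst [(G, add_mset (L x A) D), (add_mset (L x B) G, D)]
                   (add_mset (L x (Imp A B)) G, D)"
| RImp: "rule_inst [(add_mset (L x A) G, add_mset (L x B) D)]
                   (G, add_mset (L x (Imp A B)) D)"
| LAll: "rule_inst [(add_mset (L x A) (add_mset (In x a) (add_mset (All a A) G)), D)]
                   (add_mset (In x a) (add_mset (All a A) G), D)"
| RAll: "x \<notin> wlabs_seq (G, add_mset (All a A) D) \<Longrightarrow>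
         rule_inst [(add_mset (In x a) G, add_mset (L x A) D)]
                   (G, add_mset (All a A) D)"
| LEx: "x \<notin> wlabs_seq (add_mset (Ex a A) G, D) \<Longrightarrow>
        rule_inst [(add_mset (In x a) (add_mset (L x A) G), D)]
                  (add_mset (Ex a A) G, D)"
| REx: "rule_inst [(add_mset (In x a) G, add_mset (L x A) (add_mset (Ex a A) D))]
                  (add_mset (In x a) G, add_mset (Ex a A) D)"
| RCond: "a \<notin> nlabs_seq (G, add_mset (L x (Cond A B)) D) \<Longrightarrow>
          rule_inst [(add_mset (NB a x) (add_mset (Ex a A) G), add_mset (Cp x a A B) D)]
                    (G, add_mset (L x (Cond A B)) D)"
| LCond: "rule_inst [(add_mset (NB a x) (add_mset (L x (Cond A B)) G), add_mset (Ex a A) D),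
                     (add_mset (Ex a A) (add_mset (Cp x a A B) (add_mset (NB a x)
                        (add_mset (L x (Cond A B)) G))), D)]
                    (add_mset (NB a x) (add_mset (L x (Cond A B)) G), D)"
| RCp: "rule_inst [(add_mset (NB c x) (add_mset (Sub c a) G),
                      add_mset (Cp x a A B) (add_mset (Ex c A) D)),
                   (add_mset (NB c x) (add_mset (Sub c a) G),
                      add_mset (Cp x a A B) (add_mset (All c (Imp A B)) D))]
                  (add_mset (NB c x) (add_mset (Sub c a) G), add_mset (Cp x a A B) D)"
| LCp: "c \<notin> nlabs_seq (add_mset (Cp x a A B) G, D) \<Longrightarrow>
        rule_inst [(add_mset (NB c x) (add_mset (Sub c a) (add_mset (Ex c A)
                      (add_mset (All c (Imp A B)) G))), D)]
                  (add_mset (Cp x a A B) G, D)"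
| Ref: "rule_inst [(add_mset (Sub a a) G, D)] (G, D)"
| Tr: "rule_inst [(add_mset (Sub c a) (add_mset (Sub c b) (add_mset (Sub b a) G)), D)]
                 (add_mset (Sub c b) (add_mset (Sub b a) G), D)"
| LSub: "rule_inst [(add_mset (In x a) (add_mset (Sub a b) (add_mset (In x b) G)), D)]
                   (add_mset (In x a) (add_mset (Sub a b) G), D)"
| MonAll: "rule_inst [(add_mset (Sub b a) (add_mset (All b A) (add_mset (All a A) G)), D)]
                     (add_mset (Sub b a) (add_mset (All a A) G), D)"

definition step :: "sequent \<Rightarrow> sequent \<Rightarrow> bool" where
  "step S S' \<longleftrightarrow> (\<exists>ps. rule_inst ps S \<and> S' \<in> set ps)"

definition is_branch :: "sequent list \<Rightarrow> wlab \<Rightarrow> fm \<Rightarrow> bool" where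
  "is_branch Ss x0 A0 \<longleftrightarrow> Ss \<noteq> [] \<and> hd Ss = ({#}, {# L x0 A0 #}) \<and>
     (\<forall>i. Suc i < length Ss \<longrightarrow> step (Ss ! i) (Ss ! Suc i))"

definition downG :: "sequent list \<Rightarrow> lf set" where
  "downG Ss = (\<Union>S \<in> set Ss. set_mset (fst S))"

definition downD :: "sequent list \<Rightarrow> lf set" where
  "downD Ss = (\<Union>S \<in> set Ss. set_mset (snd S))"

definition saturated :: "sequent list \<Rightarrow> bool" where
  "saturated Ss \<longleftrightarrow> (let G = fst (last Ss); D = snd (last Ss); dG = downG Ss; dD = downD Ss in
     (\<forall>x p. \<not> (L x (Atom p) \<in># G \<and> L x (Atom p) \<in># D)) \<and>
     (\<forall>x. L x Bot \<notin># G) \<and>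
     (\<forall>x A B. L x (Conj A B) \<in> dG \<longrightarrow> L x A \<in> dG \<and> L x B \<in> dG) \<and>
     (\<forall>x A B. L x (Conj A B) \<in> dD \<longrightarrow> L x A \<in> dD \<or> L x B \<in> dD) \<and>
     (\<forall>x A B. L x (Disj A B) \<in> dG \<longrightarrow> L x A \<in> dG \<or> L x B \<in> dG) \<and>
     (\<forall>x A B. L x (Disj A B) \<in> dD \<longrightarrow> L x A \<in> dD \<and> L x B \<in> dD) \<and>
     (\<forall>x A B. L x (Imp A B) \<in> dG \<longrightarrow> L x B \<in> dG \<or> L x A \<in> dD) \<and>
     (\<forall>x A B. L x (Imp A B) \<in># D \<longrightarrow> L x A \<in> dG \<and> L x B \<in> dD) \<and>
     (\<forall>a. a \<in> nlabs_seq (G, D) \<longrightarrow> Sub a a \<in># G) \<and>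
     (\<forall>a b c. Sub a b \<in># G \<and> Sub b c \<in># G \<longrightarrow> Sub a c \<in># G) \<and>
     (\<forall>x a b. In x a \<in># G \<and> Sub a b \<in># G \<longrightarrow> In x b \<in># G) \<and>
     (\<forall>x a A. In x a \<in># G \<and> All a A \<in># G \<longrightarrow> L x A \<in> dG) \<and>
     (\<forall>a A. All a A \<in> dD \<longrightarrow> (\<exists>x. In x a \<in># G \<and> L x A \<in> dD)) \<and>
     (\<forall>a A. Ex a A \<in> dG \<longrightarrow> (\<exists>x. In x a \<in># G \<and> L x A \<in> dG)) \<and>
     (\<forall>x a A. In x a \<in># G \<and> Ex a A \<in># D \<longrightarrow> L x A \<in> dD) \<and>
     (\<forall>x A B. L x (Cond A B) \<in> dD \<longrightarrow>
        (\<exists>a. NB a x \<in># G \<and> Ex a A \<in> dG \<and> Cp x a A B \<in># D)) \<and>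
     (\<forall>x a A B. NB a x \<in># G \<and> L x (Cond A B) \<in># G \<longrightarrow>
        Ex a A \<in> dD \<or> (Ex a A \<in> dG \<and> Cp x a A B \<in> dG)) \<and>
     (\<forall>x a c A B. NB c x \<in># G \<and> Sub c a \<in># G \<and> Cp x a A B \<in># D \<longrightarrow>
        Ex c A \<in># D \<or> All c (Imp A B) \<in> dD) \<and>
     (\<forall>x a A B. Cp x a A B \<in> dG \<longrightarrow>
        (\<exists>c. NB c x \<in># G \<and> Sub c a \<in># G \<and> Ex c A \<in> dG \<and> All c (Imp A B) \<in># G)) \<and>
     (\<forall>a b A. Sub b a \<in># G \<and> All a A \<in># G \<longrightarrow> All b A \<in># G))"

definition nmodel :: "nat set \<Rightarrow> (nat \<Rightarrow> nat set set) \<Rightarrow> (nat \<Rightarrow> nat set) \<Rightarrow> bool" where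
  "nmodel W N V \<longleftrightarrow> W \<noteq> {} \<and> (\<forall>x\<in>W. N x \<subseteq> Pow W \<and> (\<forall>\<alpha>\<in>N x. \<alpha> \<noteq> {})) \<and>
     (\<forall>p. V p \<subseteq> W)"

primrec forces :: "(nat \<Rightarrow> nat set set) \<Rightarrow> (nat \<Rightarrow> nat set) \<Rightarrow> nat \<Rightarrow> fm \<Rightarrow> bool" where
  "forces N V w (Atom p) = (w \<in> V p)"
| "forces N V w Bot = False"
| "forces N V w (Conj A B) = (forces N V w A \<and> forces N V w B)"
| "forces N V w (Disj A B) = (forces N V w A \<or> forces N V w B)"
| "forces N V w (Imp A B) = (forces N V w A \<longrightarrow> forces N V w B)"
| "forces N V w (Cond A B) =
     (\<forall>\<alpha>\<in>N w. (\<exists>y\<in>\<alpha>. forces N V y A) \<longrightarrow>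
        (\<exists>\<beta>\<in>N w. \<beta> \<subseteq> \<alpha> \<and> (\<exists>y\<in>\<beta>. forces N V y A) \<and>
                   (\<forall>y\<in>\<beta>. forces N V y A \<longrightarrow> forces N V y B)))"

definition realization :: "nat set \<Rightarrow> (wlab \<Rightarrow> nat) \<Rightarrow> (nlab \<Rightarrow> nat set) \<Rightarrow> bool" where
  "realization W \<rho> \<sigma> \<longleftrightarrow> (\<forall>x. \<rho> x \<in> W) \<and> (\<forall>a. \<sigma> a \<subseteq> W)"

fun sat :: "(nat \<Rightarrow> nat set set) \<Rightarrow> (nat \<Rightarrow> nat set) \<Rightarrow> (wlab \<Rightarrow> nat) \<Rightarrow> (nlab \<Rightarrow> nat set)
            \<Rightarrow> lf \<Rightarrow> bool" where
  "sat N V \<rho> \<sigma> (NB a x) = (\<sigma> a \<in> N (\<rho> x))"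
| "sat N V \<rho> \<sigma> (In x a) = (\<rho> x \<in> \<sigma> a)"
| "sat N V \<rho> \<sigma> (Sub a b) = (\<sigma> a \<subseteq> \<sigma> b)"
| "sat N V \<rho> \<sigma> (L x A) = forces N V (\<rho> x) A"
| "sat N V \<rho> \<sigma> (Ex a A) = (\<exists>y\<in>\<sigma> a. forces N V y A)"
| "sat N V \<rho> \<sigma> (All a A) = (\<forall>y\<in>\<sigma> a. forces N V y A)"
| "sat N V \<rho> \<sigma> (Cp x a A B) =
     (\<sigma> a \<in> N (\<rho> x) \<and>
      (\<exists>\<beta>\<in>N (\<rho> x). \<beta> \<subseteq> \<sigma> a \<and> (\<exists>y\<in>\<beta>. forces N V y A) \<and>
                       (\<forall>y\<in>\<beta>. forces N V y (Imp A B))))"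

end

theory Submission
  imports Defs
begin

lemma stepE: "step S S' \<Longrightarrow> (\<And>ps. rule_inst ps S \<Longrightarrow> S' \<in> set ps \<Longrightarrow> P) \<Longrightarrow> P"
  unfolding step_def by blast

lemma persist_fst:
  assumes "step S S'" "F \<in># fst S"
    "\<not> (\<exists>x A B. F = L x (Conj A B) \<or> F = L x (Disj A B) \<or> F = L x (Imp A B))"
    "\<not> (\<exists>a A. F = Ex a A)" "\<not> (\<exists>x a A B. F = Cp x a A B)"
  shows "F \<in># fst S'"
  using assms(1)
proof (rule stepE)
  fix ps assume "rule_inst ps S" "S' \<in> set ps"
  then show ?thesis using assms(2-5)
    by (cases rule: rule_inst.cases) auto
qed

lemma persist_snd:
  assumes "step S S'" "F \<in># snd S"
    "\<not> (\<exists>x A B. F = L x (Conj A B) \<or> F = L x (Disj A B) \<or> F = L x (Imp A B) \<or> F = L x (Cond A B))"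
    "\<not> (\<exists>a A. F = All a A)"
  shows "F \<in># snd S'"
  using assms(1)
proof (rule stepE)
  fix ps assume "rule_inst ps S" "S' \<in> set ps"
  then show ?thesis using assms(2-4)
    by (cases rule: rule_inst.cases) auto
qed

lemma imp_snd:
  assumes "step S S'" "L x (Imp A B) \<in># snd S"
  shows "L x (Imp A B) \<in># snd S' \<or> (L x A \<in># fst S' \<and> L x B \<in># snd S')"
  using assms(1)
proof (rule stepE)
  fix ps assume "rule_inst ps S" "S' \<in> set ps"
  then show ?thesis using assms(2)
    by (cases rule: rule_inst.cases) (auto split: if_splits)
qed

lemma nb_new:
  assumes "step S S'" "NB a x \<in># fst S'"
  shows "NB a x \<in># fst S \<or> (\<exists>A. Ex a A \<in># fst S')"
  using assms(1)
proof (rule stepE)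
  fix ps assume "rule_inst ps S" "S' \<in> set ps"
  then show ?thesis using assms(2)
    by (cases rule: rule_inst.cases) auto
qed

lemma cp_new:
  assumes "step S S'" "Cp x a A B \<in># fst S'"
  shows "Cp x a A B \<in># fst S \<or> NB a x \<in># fst S'"
  using assms(1)
proof (rule stepE)
  fix ps assume "rule_inst ps S" "S' \<in> set ps"
  then show ?thesis using assms(2)
    by (cases rule: rule_inst.cases) auto
qed

lemma rel_snd:
  assumes "step S S'" "F \<in># snd S'" "\<not> (\<exists>x A. F = L x A)" "\<not> (\<exists>a A. F = Ex a A \<or> F = All a A)"
    "\<not> (\<exists>x a A B. F = Cp x a A B)"
  shows "F \<in># snd S"
  using assms(1)
proof (rule stepE)
  fix ps assume "rule_inst ps S" "S' \<in> set ps"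
  then show ?thesis using assms(2-5)
    by (cases rule: rule_inst.cases) auto
qed


lemma fwd:
  assumes steps: "\<forall>i. Suc i < length Ss \<longrightarrow> step (Ss!i) (Ss!Suc i)"
    and pres: "\<And>S S'. step S S' \<Longrightarrow> P S \<Longrightarrow> P S' \<or> R S'"
    and i: "i < length Ss" "P (Ss!i)"
  shows "P (last Ss) \<or> (\<exists>S\<in>set Ss. R S)"
proof -
  have "\<forall>j. i \<le> j \<longrightarrow> j < length Ss \<longrightarrow> P (Ss!j) \<or> (\<exists>S\<in>set Ss. R S)"
  proof
    fix j show "i \<le> j \<longrightarrow> j < length Ss \<longrightarrow> P (Ss!j) \<or> (\<exists>S\<in>set Ss. R S)"
    proof (induction j)
      case 0 then show ?case using i by auto
    next
      case (Suc j)
      show ?case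
      proof (intro impI)
        assume a: "i \<le> Suc j" "Suc j < length Ss"
        show "P (Ss!Suc j) \<or> (\<exists>S\<in>set Ss. R S)"
        proof (cases "i = Suc j")
          case True then show ?thesis using i by auto
        next
          case False
          then have "P (Ss!j) \<or> (\<exists>S\<in>set Ss. R S)" using Suc a by auto
          moreover have "step (Ss!j) (Ss!Suc j)" using steps a by auto
          ultimately show ?thesis using pres a nth_mem by blast
        qed
      qed
    qed
  qed
  then have "P (Ss!(length Ss - 1)) \<or> (\<exists>S\<in>set Ss. R S)" using i by auto
  moreover have "Ss \<noteq> []" using i by auto
  ultimately show ?thesis by (simp add: last_conv_nth)
qed

lemma bwd:
  assumes steps: "\<forall>i. Suc i < length Ss \<longrightarrow> step (Ss!i) (Ss!Suc i)"
    and pres: "\<And>S S'. step S S' \<Longrightarrow> P S' \<Longrightarrow> P S \<or> R S'"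
    and z: "\<not> P (Ss!0)"
  shows "i < length Ss \<Longrightarrow> P (Ss!i) \<Longrightarrow> \<exists>S\<in>set Ss. R S"
proof (induction i)
  case 0 then show ?case using z by auto
next
  case (Suc i)
  have "step (Ss!i) (Ss!Suc i)" using steps Suc by auto
  then have "P (Ss!i) \<or> R (Ss!Suc i)" using pres Suc by blast
  then show ?case using Suc nth_mem by (metis Suc_lessD)
qed

definition sig :: "lf multiset \<Rightarrow> nlab \<Rightarrow> nat set" where
  "sig G b = {2*y | y. In y b \<in># G} \<union> {2*a+1 | a. Sub a b \<in># G \<and> (\<exists>y. In y a \<in># G)}"

definition orig :: "lf multiset \<Rightarrow> nat \<Rightarrow> nat" where
  "orig G w = (if even w then w div 2 else (SOME y. In y ((w - 1) div 2) \<in># G))"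

definition NN :: "lf multiset \<Rightarrow> nat \<Rightarrow> nat set set" where
  "NN G w = {sig G b | b. NB b (orig G w) \<in># G}"

definition VV :: "lf multiset \<Rightarrow> nat set \<Rightarrow> nat \<Rightarrow> nat set" where
  "VV G W p = {w \<in> W. L (orig G w) (Atom p) \<in># G}"

definition WLs :: "sequent list \<Rightarrow> nat set" where
  "WLs Ss = (\<Union>S\<in>set Ss. wlabs_seq S)"

definition NLs :: "sequent list \<Rightarrow> nat set" where
  "NLs Ss = (\<Union>S\<in>set Ss. nlabs_seq S)"

definition Wd :: "sequent list \<Rightarrow> nat set" where
  "Wd Ss = (\<lambda>y. 2*y) ` WLs Ss \<union> (\<lambda>a. 2*a+1) ` NLs Ss"

lemma forces_eq:
  "N w = N w' \<Longrightarrow> (\<forall>p. w \<in> V p \<longleftrightarrow> w' \<in> V p) \<Longrightarrow> forces N V w F = forces N V w' F"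
  by (induction F) auto

lemma finite_wlabs_lf: "finite (wlabs_lf F)" by (cases F) auto
lemma finite_nlabs_lf: "finite (nlabs_lf F)" by (cases F) auto

lemma finite_Wd: "finite (Wd Ss)"
  unfolding Wd_def WLs_def NLs_def wlabs_seq_def nlabs_seq_def
  by (auto simp: finite_wlabs_lf finite_nlabs_lf)

locale ctx =
  fixes Ss x0 A0
  assumes br: "is_branch Ss x0 A0" and st: "saturated Ss"
begin

abbreviation "G \<equiv> fst (last Ss)"
abbreviation "D \<equiv> snd (last Ss)"
abbreviation "dG \<equiv> downG Ss"
abbreviation "dD \<equiv> downD Ss"
abbreviation "WL \<equiv> WLs Ss"
abbreviation "W \<equiv> Wd Ss"
abbreviation "NNs \<equiv> NN G"
abbreviation "VVs \<equiv> VV G W"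

lemma steps: "\<forall>i. Suc i < length Ss \<longrightarrow> step (Ss!i) (Ss!Suc i)"
  using br unfolding is_branch_def by blast
lemma ne: "Ss \<noteq> []" using br unfolding is_branch_def by blast
lemma hd0: "Ss!0 = ({#}, {# L x0 A0 #})" using br ne unfolding is_branch_def by (simp add: hd_conv_nth)
lemma last_in: "last Ss \<in> set Ss" using ne by simp

lemmas stu = st[unfolded saturated_def Let_def]

lemma s_atom: "L x (Atom p) \<in># G \<Longrightarrow> L x (Atom p) \<in># D \<Longrightarrow> False"
  using stu[THEN conjunct1] by blast
lemma s_bot: "L x Bot \<in># G \<Longrightarrow> False"
  using stu[THEN conjunct2, THEN conjunct1] by blast
lemma s_conjG: "L x (Conj A B) \<in> dG \<Longrightarrow> L x A \<in> dG \<and> L x B \<in> dG"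
  using stu[THEN conjunct2, THEN conjunct2, THEN conjunct1] by blast
lemma s_conjD: "L x (Conj A B) \<in> dD \<Longrightarrow> L x A \<in> dD \<or> L x B \<in> dD"
  using stu[THEN conjunct2, THEN conjunct2, THEN conjunct2, THEN conjunct1] by blast
lemma s_disjG: "L x (Disj A B) \<in> dG \<Longrightarrow> L x A \<in> dG \<or> L x B \<in> dG"
  using stu[THEN conjunct2, THEN conjunct2, THEN conjunct2, THEN conjunct2, THEN conjunct1] by blast
lemma s_disjD: "L x (Disj A B) \<in> dD \<Longrightarrow> L x A \<in> dD \<and> L x B \<in> dD"
  using stu[THEN conjunct2, THEN conjunct2, THEN conjunct2, THEN conjunct2, THEN conjunct2, THEN conjunct1] by blast
lemma s_impG: "L x (Imp A B) \<in> dG \<Longrightarrow> L x B \<in> dG \<or> L x A \<in> dD"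
  using stu[THEN conjunct2, THEN conjunct2, THEN conjunct2, THEN conjunct2, THEN conjunct2, THEN conjunct2, THEN conjunct1] by blast
lemma s_impD: "L x (Imp A B) \<in># D \<Longrightarrow> L x A \<in> dG \<and> L x B \<in> dD"
  using stu[THEN conjunct2, THEN conjunct2, THEN conjunct2, THEN conjunct2, THEN conjunct2, THEN conjunct2, THEN conjunct2, THEN conjunct1] by blast
lemma s_ref: "a \<in> nlabs_seq (G, D) \<Longrightarrow> Sub a a \<in># G"
  using stu[THEN conjunct2, THEN conjunct2, THEN conjunct2, THEN conjunct2, THEN conjunct2, THEN conjunct2, THEN conjunct2, THEN conjunct2, THEN conjunct1] by blast
lemma s_tr: "Sub a b \<in># G \<Longrightarrow> Sub b c \<in># G \<Longrightarrow> Sub a c \<in># G"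
  using stu[THEN conjunct2, THEN conjunct2, THEN conjunct2, THEN conjunct2, THEN conjunct2, THEN conjunct2, THEN conjunct2, THEN conjunct2, THEN conjunct2, THEN conjunct1] by blast
lemma s_lsub: "In x a \<in># G \<Longrightarrow> Sub a b \<in># G \<Longrightarrow> In x b \<in># G"
  using stu[THEN conjunct2, THEN conjunct2, THEN conjunct2, THEN conjunct2, THEN conjunct2, THEN conjunct2, THEN conjunct2, THEN conjunct2, THEN conjunct2, THEN conjunct2, THEN conjunct1] by blast
lemma s_allG: "In x a \<in># G \<Longrightarrow> All a A \<in># G \<Longrightarrow> L x A \<in> dG"
  using stu[THEN conjunct2, THEN conjunct2, THEN conjunct2, THEN conjunct2, THEN conjunct2, THEN conjunct2, THEN conjunct2, THEN conjunct2, THEN conjunct2, THEN conjunct2, THEN conjunct2, THEN conjunct1] by blast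
lemma s_allD: "All a A \<in> dD \<Longrightarrow> \<exists>x. In x a \<in># G \<and> L x A \<in> dD"
  using stu[THEN conjunct2, THEN conjunct2, THEN conjunct2, THEN conjunct2, THEN conjunct2, THEN conjunct2, THEN conjunct2, THEN conjunct2, THEN conjunct2, THEN conjunct2, THEN conjunct2, THEN conjunct2, THEN conjunct1] by blast
lemma s_exG: "Ex a A \<in> dG \<Longrightarrow> \<exists>x. In x a \<in># G \<and> L x A \<in> dG"
  using stu[THEN conjunct2, THEN conjunct2, THEN conjunct2, THEN conjunct2, THEN conjunct2, THEN conjunct2, THEN conjunct2, THEN conjunct2, THEN conjunct2, THEN conjunct2, THEN conjunct2, THEN conjunct2, THEN conjunct2, THEN conjunct1] by blast
lemma s_exD: "In x a \<in># G \<Longrightarrow> Ex a A \<in># D \<Longrightarrow> L x A \<in> dD"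
  using stu[THEN conjunct2, THEN conjunct2, THEN conjunct2, THEN conjunct2, THEN conjunct2, THEN conjunct2, THEN conjunct2, THEN conjunct2, THEN conjunct2, THEN conjunct2, THEN conjunct2, THEN conjunct2, THEN conjunct2, THEN conjunct2, THEN conjunct1] by blast
lemma s_condD: "L x (Cond A B) \<in> dD \<Longrightarrow> \<exists>a. NB a x \<in># G \<and> Ex a A \<in> dG \<and> Cp x a A B \<in># D"
  using stu[THEN conjunct2, THEN conjunct2, THEN conjunct2, THEN conjunct2, THEN conjunct2, THEN conjunct2, THEN conjunct2, THEN conjunct2, THEN conjunct2, THEN conjunct2, THEN conjunct2, THEN conjunct2, THEN conjunct2, THEN conjunct2, THEN conjunct2, THEN conjunct1] by blast
lemma s_condG: "NB a x \<in># G \<Longrightarrow> L x (Cond A B) \<in># G \<Longrightarrow>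
        Ex a A \<in> dD \<or> (Ex a A \<in> dG \<and> Cp x a A B \<in> dG)"
  using stu[THEN conjunct2, THEN conjunct2, THEN conjunct2, THEN conjunct2, THEN conjunct2, THEN conjunct2, THEN conjunct2, THEN conjunct2, THEN conjunct2, THEN conjunct2, THEN conjunct2, THEN conjunct2, THEN conjunct2, THEN conjunct2, THEN conjunct2, THEN conjunct2, THEN conjunct1] by blast
lemma s_cpD: "NB c x \<in># G \<Longrightarrow> Sub c a \<in># G \<Longrightarrow> Cp x a A B \<in># D \<Longrightarrow>
        Ex c A \<in># D \<or> All c (Imp A B) \<in> dD"
  using stu[THEN conjunct2, THEN conjunct2, THEN conjunct2, THEN conjunct2, THEN conjunct2, THEN conjunct2, THEN conjunct2, THEN conjunct2, THEN conjunct2, THEN conjunct2, THEN conjunct2, THEN conjunct2, THEN conjunct2, THEN conjunct2, THEN conjunct2, THEN conjunct2, THEN conjunct2, THEN conjunct1] by blast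
lemma s_cpG: "Cp x a A B \<in> dG \<Longrightarrow>
        (\<exists>c. NB c x \<in># G \<and> Sub c a \<in># G \<and> Ex c A \<in> dG \<and> All c (Imp A B) \<in># G)"
  using stu[THEN conjunct2, THEN conjunct2, THEN conjunct2, THEN conjunct2, THEN conjunct2, THEN conjunct2, THEN conjunct2, THEN conjunct2, THEN conjunct2, THEN conjunct2, THEN conjunct2, THEN conjunct2, THEN conjunct2, THEN conjunct2, THEN conjunct2, THEN conjunct2, THEN conjunct2, THEN conjunct2, THEN conjunct1] by blast

lemma dG_iff: "F \<in> dG \<longleftrightarrow> (\<exists>i<length Ss. F \<in># fst (Ss!i))"
  unfolding downG_def by (metis UN_iff in_set_conv_nth)
lemma dD_iff: "F \<in> dD \<longleftrightarrow> (\<exists>i<length Ss. F \<in># snd (Ss!i))"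
  unfolding downD_def by (metis UN_iff in_set_conv_nth)
lemma G_dG: "F \<in># G \<Longrightarrow> F \<in> dG" unfolding downG_def using last_in by blast
lemma D_dD: "F \<in># D \<Longrightarrow> F \<in> dD" unfolding downD_def using last_in by blast

lemma pers_G:
  assumes "F \<in> dG"
    "\<not> (\<exists>x A B. F = L x (Conj A B) \<or> F = L x (Disj A B) \<or> F = L x (Imp A B))"
    "\<not> (\<exists>a A. F = Ex a A)" "\<not> (\<exists>x a A B. F = Cp x a A B)"
  shows "F \<in># G"
proof -
  obtain i where i: "i < length Ss" "F \<in># fst (Ss!i)" using assms(1) dG_iff by blast
  show ?thesis
    using fwd[OF steps, where P="\<lambda>S. F \<in># fst S" and R="\<lambda>S. False", OF _ i] persist_fst assms
    by blast
qed

lemma pers_D: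
  assumes "F \<in> dD"
    "\<not> (\<exists>x A B. F = L x (Conj A B) \<or> F = L x (Disj A B) \<or> F = L x (Imp A B) \<or> F = L x (Cond A B))"
    "\<not> (\<exists>a A. F = All a A)"
  shows "F \<in># D"
proof -
  obtain i where i: "i < length Ss" "F \<in># snd (Ss!i)" using assms(1) dD_iff by blast
  show ?thesis
    using fwd[OF steps, where P="\<lambda>S. F \<in># snd S" and R="\<lambda>S. False", OF _ i] persist_snd assms
    by blast
qed

lemma impD: "L x (Imp A B) \<in> dD \<Longrightarrow> L x A \<in> dG \<and> L x B \<in> dD"
proof -
  assume "L x (Imp A B) \<in> dD"
  then obtain i where i: "i < length Ss" "L x (Imp A B) \<in># snd (Ss!i)" using dD_iff by blast
  have "L x (Imp A B) \<in># D \<or> (\<exists>S\<in>set Ss. L x A \<in># fst S \<and> L x B \<in># snd S)"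
    using fwd[OF steps, where P="\<lambda>S. L x (Imp A B) \<in># snd S"
        and R="\<lambda>S. L x A \<in># fst S \<and> L x B \<in># snd S", OF _ i] imp_snd by blast
  then show ?thesis using s_impD unfolding downG_def downD_def by blast
qed

lemma nb_inhab: "NB c x \<in># G \<Longrightarrow> \<exists>y. In y c \<in># G"
proof -
  assume a: "NB c x \<in># G"
  have "\<exists>S\<in>set Ss. \<exists>A. Ex c A \<in># fst S"
    using bwd[OF steps, where P="\<lambda>S. NB c x \<in># fst S" and R="\<lambda>S. \<exists>A. Ex c A \<in># fst S"
       and i="length Ss - 1"] nb_new hd0 a ne by (simp add: last_conv_nth)
  then show ?thesis using s_exG unfolding downG_def by blast
qed

lemma cp_nb: "Cp x a A B \<in> dG \<Longrightarrow> NB a x \<in># G"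
proof -
  assume "Cp x a A B \<in> dG"
  then obtain i where i: "i < length Ss" "Cp x a A B \<in># fst (Ss!i)" using dG_iff by blast
  have "\<exists>S\<in>set Ss. NB a x \<in># fst S"
    using bwd[OF steps, where P="\<lambda>S. Cp x a A B \<in># fst S" and R="\<lambda>S. NB a x \<in># fst S", OF _ _ i]
      cp_new hd0 by simp
  then show ?thesis using pers_G unfolding downG_def by blast
qed

lemma rel_notD: "F \<in> dD \<Longrightarrow> \<exists>x A. F = L x A \<or> F = Ex x A \<or> F = All x A \<or> (\<exists>a B. F = Cp x a A B)"
proof (rule ccontr)
  assume a: "F \<in> dD" "\<not> (\<exists>x A. F = L x A \<or> F = Ex x A \<or> F = All x A \<or> (\<exists>a B. F = Cp x a A B))"
  then obtain i where i: "i < length Ss" "F \<in># snd (Ss!i)" using dD_iff by blast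
  have "\<exists>S\<in>set Ss. False"
    using bwd[OF steps, where P="\<lambda>S. F \<in># snd S" and R="\<lambda>S. False", OF _ _ i]
      rel_snd[of _ _ F] hd0 a by auto
  then show False by blast
qed

end

context ctx begin

abbreviation "fs w F \<equiv> forces NNs VVs w F"

lemma wl_dG: "F \<in> dG \<Longrightarrow> wlabs_lf F \<subseteq> WL"
  unfolding downG_def WLs_def wlabs_seq_def by blast
lemma wl_dD: "F \<in> dD \<Longrightarrow> wlabs_lf F \<subseteq> WL"
  unfolding downD_def WLs_def wlabs_seq_def by blast
lemma nl_dG: "F \<in> dG \<Longrightarrow> nlabs_lf F \<subseteq> NLs Ss"
  unfolding downG_def NLs_def nlabs_seq_def by blast
lemma nl_G: "F \<in># G \<Longrightarrow> nlabs_lf F \<subseteq> nlabs_seq (G, D)"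
  unfolding nlabs_seq_def by auto
lemma x0_WL: "x0 \<in> WL"
proof -
  have "Ss!0 \<in> set Ss" using ne by simp
  then show ?thesis using hd0 unfolding WLs_def wlabs_seq_def by force
qed

lemma In_WL: "In y b \<in># G \<Longrightarrow> y \<in> WL" using wl_dG[OF G_dG] by fastforce
lemma Sub_NL: "Sub a b \<in># G \<Longrightarrow> a \<in> NLs Ss" using nl_dG[OF G_dG] by fastforce

lemma orig2[simp]: "orig G' (2*x) = x" unfolding orig_def by simp
lemma orig_odd[simp]: "orig G' (2*a+1) = (SOME y. In y a \<in># G')" unfolding orig_def by simp

lemma two_W: "x \<in> WL \<Longrightarrow> 2*x \<in> W" unfolding Wd_def by blast

lemma sig_W: "sig G b \<subseteq> W"
  unfolding sig_def Wd_def using In_WL Sub_NL by blast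

lemma sig_in: "w \<in> sig G b \<Longrightarrow> In (orig G w) b \<in># G"
proof -
  assume "w \<in> sig G b"
  then consider y where "w = 2*y" "In y b \<in># G"
    | a y where "w = 2*a+1" "Sub a b \<in># G" "In y a \<in># G"
    unfolding sig_def by blast
  then show ?thesis
  proof cases
    case 1 then show ?thesis by simp
  next
    case 2
    then have "In (SOME y. In y a \<in># G) a \<in># G" by (metis someI)
    moreover have "orig G w = (SOME y. In y a \<in># G)" using 2 by (simp add: orig_def)
    ultimately show ?thesis using 2 s_lsub by metis
  qed
qed

lemma NN2: "NNs (2*x) = {sig G b | b. NB b x \<in># G}" unfolding NN_def by simp

lemma forces_sig: "w \<in> sig G b \<Longrightarrow> fs w F = fs (2 * orig G w) F"
proof -
  assume w: "w \<in> sig G b"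
  have "w \<in> W" using w sig_W by blast
  moreover have "2 * orig G w \<in> W" using two_W In_WL sig_in[OF w] by blast
  ultimately show ?thesis
    by (intro forces_eq) (auto simp: NN_def VV_def)
qed

lemma two_in_sig: "In y b \<in># G \<Longrightarrow> 2*y \<in> sig G b" unfolding sig_def by blast

lemma sig_mono: "Sub a b \<in># G \<Longrightarrow> sig G a \<subseteq> sig G b"
  unfolding sig_def using s_lsub s_tr by blast

lemma tag_sig: "NB c x \<in># G \<Longrightarrow> 2*c+1 \<in> sig G c"
proof -
  assume a: "NB c x \<in># G"
  have "Sub c c \<in># G" using s_ref nl_G[OF a] by simp
  then show ?thesis using nb_inhab[OF a] unfolding sig_def by blast
qed

lemma tag_sub: "2*c+1 \<in> sig G a \<Longrightarrow> Sub c a \<in># G"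
proof -
  assume "2*c+1 \<in> sig G a"
  then consider y where "2*c+1 = 2*y" | d where "2*c+1 = 2*d+1" "Sub d a \<in># G"
    unfolding sig_def by blast
  then show ?thesis
  proof cases
    case 1 then have False by presburger
    then show ?thesis by blast
  next
    case 2 then show ?thesis by simp
  qed
qed

definition T :: "fm \<Rightarrow> bool" where
  "T F \<longleftrightarrow> (\<forall>x\<in>WL. (L x F \<in> dG \<longrightarrow> fs (2*x) F) \<and> (L x F \<in> dD \<longrightarrow> \<not> fs (2*x) F))"

lemma cp_neg:
  assumes TA: "T A" and TB: "T B" and cp: "Cp x a A B \<in># D"
    and b: "\<beta> \<in> NNs (2*x)" "\<beta> \<subseteq> sig G a" "\<exists>y\<in>\<beta>. fs y A"
  shows "\<exists>y\<in>\<beta>. fs y A \<and> \<not> fs y B"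
proof -
  obtain c where c: "\<beta> = sig G c" "NB c x \<in># G" using b(1) NN2 by auto
  have "2*c+1 \<in> sig G a" using tag_sig[OF c(2)] b(2) c(1) by blast
  then have sub: "Sub c a \<in># G" by (rule tag_sub)
  from s_cpD[OF c(2) sub cp] show ?thesis
  proof
    assume ex: "Ex c A \<in># D"
    obtain y where y: "y \<in> \<beta>" "fs y A" using b(3) by blast
    have i: "In (orig G y) c \<in># G" using sig_in y c by blast
    have "L (orig G y) A \<in> dD" using s_exD[OF i ex] .
    then have "\<not> fs (2 * orig G y) A" using TA In_WL[OF i] unfolding T_def by blast
    then show ?thesis using y forces_sig c by blast
  next
    assume "All c (Imp A B) \<in> dD"
    then obtain z where z: "In z c \<in># G" "L z (Imp A B) \<in> dD" using s_allD by blast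
    have "L z A \<in> dG" "L z B \<in> dD" using impD[OF z(2)] by auto
    then have "fs (2*z) A" "\<not> fs (2*z) B" using TA TB In_WL[OF z(1)] unfolding T_def by auto
    then show ?thesis using two_in_sig[OF z(1)] c by blast
  qed
qed

lemma cp_pos:
  assumes TA: "T A" and TB: "T B" and cp: "Cp x a A B \<in> dG"
  shows "\<exists>\<beta>\<in>NNs (2*x). \<beta> \<subseteq> sig G a \<and> (\<exists>y\<in>\<beta>. fs y A) \<and> (\<forall>y\<in>\<beta>. fs y A \<longrightarrow> fs y B)"
proof -
  obtain c where c: "NB c x \<in># G" "Sub c a \<in># G" "Ex c A \<in> dG" "All c (Imp A B) \<in># G"
    using s_cpG[OF cp] by blast
  have 1: "sig G c \<in> NNs (2*x)" using c NN2 by blast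
  obtain y where y: "In y c \<in># G" "L y A \<in> dG" using s_exG[OF c(3)] by blast
  have 2: "fs (2*y) A" using TA y In_WL unfolding T_def by blast
  have 3: "fs w A \<longrightarrow> fs w B" if w: "w \<in> sig G c" for w
  proof -
    have i: "In (orig G w) c \<in># G" using sig_in w by blast
    have "L (orig G w) (Imp A B) \<in> dG" using s_allG[OF i c(4)] .
    then have "L (orig G w) B \<in> dG \<or> L (orig G w) A \<in> dD" using s_impG by blast
    then have "fs (2 * orig G w) A \<longrightarrow> fs (2 * orig G w) B"
      using TA TB In_WL[OF i] unfolding T_def by blast
    then show ?thesis using forces_sig[OF w] by simp
  qed
  show ?thesis using 1 sig_mono[OF c(2)] two_in_sig[OF y(1)] 2 3 by blast
qed

lemma truth_atom: "T (Atom p)"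
  unfolding T_def
proof (intro ballI conjI impI)
  fix x assume x: "x \<in> WL"
  { assume "L x (Atom p) \<in> dG"
    then have "L x (Atom p) \<in># G" by (rule pers_G) auto
    then show "fs (2*x) (Atom p)" using two_W[OF x] unfolding VV_def forces.simps mem_Collect_eq orig2 by blast }
  { assume "L x (Atom p) \<in> dD"
    then have "L x (Atom p) \<in># D" by (rule pers_D) auto
    moreover have "L x (Atom p) \<in># G" if "fs (2*x) (Atom p)"
      using that unfolding VV_def forces.simps mem_Collect_eq orig2 by blast
    ultimately show "\<not> fs (2*x) (Atom p)" using s_atom by blast }
qed

lemma truth_bot: "T Bot"
  unfolding T_def
proof (intro ballI conjI impI)
  fix x assume "L x Bot \<in> dG"
  then have "L x Bot \<in># G" by (rule pers_G) auto
  then show "fs (2*x) Bot" using s_bot by blast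
next
  fix x show "\<not> fs (2*x) Bot" by simp
qed

lemma TG: "T A \<Longrightarrow> x \<in> WL \<Longrightarrow> L x A \<in> dG \<Longrightarrow> fs (2*x) A"
  unfolding T_def by blast
lemma TD: "T A \<Longrightarrow> x \<in> WL \<Longrightarrow> L x A \<in> dD \<Longrightarrow> \<not> fs (2*x) A"
  unfolding T_def by blast
lemma TI: "(\<And>x. x \<in> WL \<Longrightarrow> L x A \<in> dG \<Longrightarrow> fs (2*x) A) \<Longrightarrow>
    (\<And>x. x \<in> WL \<Longrightarrow> L x A \<in> dD \<Longrightarrow> \<not> fs (2*x) A) \<Longrightarrow> T A"
  unfolding T_def by blast

lemma truth_conj: assumes "T A" "T B" shows "T (Conj A B)"
proof (rule TI)
  fix x assume x: "x \<in> WL" and h: "L x (Conj A B) \<in> dG"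
  have "L x A \<in> dG" "L x B \<in> dG" using s_conjG[OF h] by (rule conjunct1, rule conjunct2)
  then have "fs (2*x) A" "fs (2*x) B" using TG[OF assms(1) x] TG[OF assms(2) x] by blast+
  then show "fs (2*x) (Conj A B)" by simp
next
  fix x assume x: "x \<in> WL" and h: "L x (Conj A B) \<in> dD"
  have "L x A \<in> dD \<or> L x B \<in> dD" using s_conjD[OF h] .
  then have "\<not> fs (2*x) A \<or> \<not> fs (2*x) B" using TD[OF assms(1) x] TD[OF assms(2) x] by blast
  then show "\<not> fs (2*x) (Conj A B)" by simp
qed

lemma truth_disj: assumes "T A" "T B" shows "T (Disj A B)"
proof (rule TI)
  fix x assume x: "x \<in> WL" and h: "L x (Disj A B) \<in> dG"
  have "L x A \<in> dG \<or> L x B \<in> dG" using s_disjG[OF h] .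
  then have "fs (2*x) A \<or> fs (2*x) B" using TG[OF assms(1) x] TG[OF assms(2) x] by blast
  then show "fs (2*x) (Disj A B)" by simp
next
  fix x assume x: "x \<in> WL" and h: "L x (Disj A B) \<in> dD"
  have "L x A \<in> dD" "L x B \<in> dD" using s_disjD[OF h] by (rule conjunct1, rule conjunct2)
  then have "\<not> fs (2*x) A" "\<not> fs (2*x) B" using TD[OF assms(1) x] TD[OF assms(2) x] by blast+
  then show "\<not> fs (2*x) (Disj A B)" by simp
qed

lemma truth_imp: assumes "T A" "T B" shows "T (Imp A B)"
proof (rule TI)
  fix x assume x: "x \<in> WL" and h: "L x (Imp A B) \<in> dG"
  have "L x B \<in> dG \<or> L x A \<in> dD" using s_impG[OF h] .
  then have "fs (2*x) B \<or> \<not> fs (2*x) A" using TG[OF assms(2) x] TD[OF assms(1) x] by blast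
  then show "fs (2*x) (Imp A B)" by auto
next
  fix x assume x: "x \<in> WL" and h: "L x (Imp A B) \<in> dD"
  have "L x A \<in> dG" "L x B \<in> dD" using impD[OF h] by (rule conjunct1, rule conjunct2)
  then have "fs (2*x) A" "\<not> fs (2*x) B" using TG[OF assms(1) x] TD[OF assms(2) x] by blast+
  then show "\<not> fs (2*x) (Imp A B)" by simp
qed

lemma truth_cond:
  assumes TA: "T A" and TB: "T B"
  shows "T (Cond A B)"
  unfolding T_def
proof (intro ballI conjI impI)
  fix x assume x: "x \<in> WL"
  { assume "L x (Cond A B) \<in> dG"
    then have cG: "L x (Cond A B) \<in># G" by (rule pers_G) auto
    show "fs (2*x) (Cond A B)" unfolding forces.simps
    proof (intro ballI impI)
      fix \<alpha> assume al: "\<alpha> \<in> NNs (2*x)" "\<exists>y\<in>\<alpha>. fs y A"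
      obtain a where a: "\<alpha> = sig G a" "NB a x \<in># G" using al(1) NN2 by auto
      from s_condG[OF a(2) cG]
      show "\<exists>\<beta>\<in>NNs (2*x). \<beta> \<subseteq> \<alpha> \<and> (\<exists>y\<in>\<beta>. fs y A) \<and> (\<forall>y\<in>\<beta>. fs y A \<longrightarrow> fs y B)"
      proof
        assume "Ex a A \<in> dD"
        then have ex: "Ex a A \<in># D" by (rule pers_D) auto
        obtain y where y: "y \<in> \<alpha>" "fs y A" using al by blast
        have i: "In (orig G y) a \<in># G" using sig_in y a by blast
        have "L (orig G y) A \<in> dD" using s_exD[OF i ex] .
        then have "\<not> fs (2 * orig G y) A" using TA In_WL[OF i] unfolding T_def by blast
        moreover have "fs y A = fs (2 * orig G y) A" using forces_sig y(1) a(1) by blast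
        ultimately show ?thesis using y(2) by simp
      next
        assume "Ex a A \<in> dG \<and> Cp x a A B \<in> dG"
        then show ?thesis using cp_pos[OF TA TB] a by blast
      qed
    qed }
  { assume "L x (Cond A B) \<in> dD"
    then obtain a where a: "NB a x \<in># G" "Ex a A \<in> dG" "Cp x a A B \<in># D" using s_condD by blast
    obtain y where y: "In y a \<in># G" "L y A \<in> dG" using s_exG[OF a(2)] by blast
    have 1: "fs (2*y) A" using TA y In_WL unfolding T_def by blast
    have 2: "sig G a \<in> NNs (2*x)" using a NN2 by blast
    have 3: "2*y \<in> sig G a" using two_in_sig[OF y(1)] .
    show "\<not> fs (2*x) (Cond A B)" unfolding forces.simps
    proof
      assume H: "\<forall>\<alpha>\<in>NNs (2*x). (\<exists>y\<in>\<alpha>. fs y A) \<longrightarrow>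
          (\<exists>\<beta>\<in>NNs (2*x). \<beta> \<subseteq> \<alpha> \<and> (\<exists>y\<in>\<beta>. fs y A) \<and> (\<forall>y\<in>\<beta>. fs y A \<longrightarrow> fs y B))"
      then obtain \<beta> where b: "\<beta> \<in> NNs (2*x)" "\<beta> \<subseteq> sig G a" "\<exists>y\<in>\<beta>. fs y A"
          "\<forall>y\<in>\<beta>. fs y A \<longrightarrow> fs y B"
        using 1 2 3 by blast
      show False using cp_neg[OF TA TB a(3) b(1-3)] b(4) by blast
    qed }
qed

lemma truth: "T F"
proof (induction F)
  case (Atom x) then show ?case by (rule truth_atom)
next
  case Bot then show ?case by (rule truth_bot)
next
  case (Conj A B) then show ?case by (rule truth_conj)
next
  case (Disj A B) then show ?case by (rule truth_disj)
next
  case (Imp A B) then show ?case by (rule truth_imp)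
next
  case (Cond A B) then show ?case by (rule truth_cond)
qed


definition rho :: "nat \<Rightarrow> nat" where
  "rho x = (if x \<in> WL then 2*x else 2*x0)"

lemma rho_WL: "x \<in> WL \<Longrightarrow> rho x = 2*x" unfolding rho_def by simp

lemma model_ok: "nmodel W NNs VVs"
  unfolding nmodel_def
proof (intro conjI ballI allI)
  show "W \<noteq> {}" using two_W[OF x0_WL] by blast
next
  fix x show "NNs x \<subseteq> Pow W" unfolding NN_def using sig_W by blast
next
  fix x \<alpha> assume "\<alpha> \<in> NNs x"
  then obtain b where b: "\<alpha> = sig G b" "NB b (orig G x) \<in># G" unfolding NN_def by blast
  obtain y where "In y b \<in># G" using nb_inhab[OF b(2)] by blast
  then show "\<alpha> \<noteq> {}" using two_in_sig b(1) by blast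
next
  fix p show "VVs p \<subseteq> W" unfolding VV_def by blast
qed

lemma real_ok: "realization W rho (sig G)"
  unfolding realization_def using sig_W two_W x0_WL unfolding rho_def by auto

lemma pos: "F \<in> dG \<Longrightarrow> sat NNs VVs rho (sig G) F"
proof (cases F)
  case (NB a x)
  assume h: "F \<in> dG"
  have g: "NB a x \<in># G" using h NB by (intro pers_G) auto
  have "x \<in> WL" using wl_dG[OF h] NB by simp
  then show ?thesis using g NB NN2 rho_WL by auto
next
  case (In x a)
  assume h: "F \<in> dG"
  have g: "In x a \<in># G" using h In by (intro pers_G) auto
  have "x \<in> WL" using wl_dG[OF h] In by simp
  then show ?thesis using g In two_in_sig rho_WL by auto
next
  case (Sub a b)
  assume h: "F \<in> dG"
  have g: "Sub a b \<in># G" using h Sub by (intro pers_G) auto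
  then show ?thesis using Sub sig_mono by auto
next
  case (L x A)
  assume h: "F \<in> dG"
  have x: "x \<in> WL" using wl_dG[OF h] L by simp
  show ?thesis using TG[OF truth x] h L rho_WL[OF x] by simp
next
  case (Ex a A)
  assume h: "F \<in> dG"
  obtain y where y: "In y a \<in># G" "L y A \<in> dG" using s_exG h Ex by blast
  have "fs (2*y) A" using TG[OF truth In_WL[OF y(1)] y(2)] .
  then show ?thesis using Ex two_in_sig[OF y(1)] by auto
next
  case (All a A)
  assume h: "F \<in> dG"
  have g: "All a A \<in># G" using h All by (intro pers_G) auto
  have "fs w A" if w: "w \<in> sig G a" for w
  proof -
    have i: "In (orig G w) a \<in># G" using sig_in[OF w] .
    have "L (orig G w) A \<in> dG" using s_allG[OF i g] .
    then have "fs (2 * orig G w) A" using TG[OF truth In_WL[OF i]] by blast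
    then show ?thesis using forces_sig[OF w] by simp
  qed
  then show ?thesis using All by simp
next
  case (Cp x a A B)
  assume h: "F \<in> dG"
  have x: "x \<in> WL" using wl_dG[OF h] Cp by simp
  have cp: "Cp x a A B \<in> dG" using h Cp by simp
  have 1: "sig G a \<in> NNs (2*x)" using cp_nb[OF cp] NN2 by blast
  obtain \<beta> where b: "\<beta> \<in> NNs (2*x)" "\<beta> \<subseteq> sig G a" "\<exists>y\<in>\<beta>. fs y A" "\<forall>y\<in>\<beta>. fs y A \<longrightarrow> fs y B"
    using cp_pos[OF truth truth cp] by blast
  show ?thesis unfolding Cp sat.simps rho_WL[OF x] forces.simps using 1 b by blast
qed

lemma neg: "F \<in> dD \<Longrightarrow> \<not> sat NNs VVs rho (sig G) F"
proof -
  assume h: "F \<in> dD"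
  from rel_notD[OF h] obtain x A where
    "F = L x A \<or> F = Ex x A \<or> F = All x A \<or> (\<exists>a B. F = Cp x a A B)" by blast
  then consider "F = L x A" | "F = Ex x A" | "F = All x A" | a B where "F = Cp x a A B" by blast
  then show ?thesis
  proof cases
    case 1
    have x: "x \<in> WL" using wl_dD[OF h] 1 by simp
    show ?thesis using TD[OF truth x] h 1 rho_WL[OF x] by simp
  next
    case 2
    have g: "Ex x A \<in># D" using h 2 by (intro pers_D) auto
    have "\<not> fs w A" if w: "w \<in> sig G x" for w
    proof -
      have i: "In (orig G w) x \<in># G" using sig_in[OF w] .
      have "L (orig G w) A \<in> dD" using s_exD[OF i g] .
      then have "\<not> fs (2 * orig G w) A" using TD[OF truth In_WL[OF i]] by blast
      then show ?thesis using forces_sig[OF w] by simp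
    qed
    then show ?thesis using 2 by simp
  next
    case 3
    obtain y where y: "In y x \<in># G" "L y A \<in> dD" using s_allD h 3 by blast
    have "\<not> fs (2*y) A" using TD[OF truth In_WL[OF y(1)] y(2)] .
    then show ?thesis using 3 two_in_sig[OF y(1)] by auto
  next
    case 4
    have xw: "x \<in> WL" using wl_dD[OF h] 4 by simp
    have cp: "Cp x a A B \<in># D" using h 4 by (intro pers_D) auto
    show ?thesis unfolding 4 sat.simps rho_WL[OF xw] forces.simps
    proof
      assume H: "sig G a \<in> NNs (2 * x) \<and>
        (\<exists>\<beta>\<in>NNs (2 * x). \<beta> \<subseteq> sig G a \<and> (\<exists>y\<in>\<beta>. fs y A) \<and> (\<forall>y\<in>\<beta>. fs y A \<longrightarrow> fs y B))"
      then obtain \<beta> where b: "\<beta> \<in> NNs (2*x)" "\<beta> \<subseteq> sig G a" "\<exists>y\<in>\<beta>. fs y A" "\<forall>y\<in>\<beta>. fs y A \<longrightarrow> fs y B"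
        by blast
      show False using cp_neg[OF truth truth cp b(1-3)] b(4) by blast
    qed
  qed
qed

end

theorem mainTheorem17:
  assumes "is_branch Ss x0 A0"
    and "saturated Ss"
  shows "\<exists>W N V \<rho> \<sigma>. finite W \<and> nmodel W N V \<and> realization W \<rho> \<sigma> \<and>
           (\<forall>F \<in> downG Ss. sat N V \<rho> \<sigma> F) \<and> (\<forall>F \<in> downD Ss. \<not> sat N V \<rho> \<sigma> F)"
proof -
  interpret ctx Ss x0 A0 using assms by unfold_locales
  show ?thesis using finite_Wd model_ok real_ok pos neg by blast
qed

end
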